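(* Let $\mathbb{F}$ be a field, $A\in\mathbb{F}^{n\times n}$, $U,V_0\in\mathbb{F}^n$, $\delta\ge1$, $1\le K<\min\{n,\delta\}$, and $\mathbb{S}\subseteq\mathbb{F}$ a finite subset. Consider the protocol: the Prover commits to vectors $W_0=V_0,W_1,\dots,W_{\lceil\delta/K\rceil}\in\mathbb{F}^n$ (claimed to equal $A^{jK}V_0$) and to values $s[0],\dots,s[\delta]$ (claimed to equal $U^TA^iV_0$); afterwards the Verifier samples $R=(r[0],\dots,r[K-1])\in\mathbb{S}^K$ and $X\in\mathbb{S}^n$ uniformly and independently (unknown to the Prover when committing), computes $Z=X^TA^K$ and $T=\sum_{i=0}^{K-1}r[i]U^TA^i$, and accepts iff for each $j=1,\dots,\lceil\delta/K\rceil$ both $X^TW_j=ZW_{j-1}$ and $\sum_{i=0}^{K-1}r[i]s[jK+i]=TW_j$ hold. Then the Verifier mistakenly misses any error in the sequence or in the checkpointing vectors with probability at most $1/|\mathbb{S}|$.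
   Context: Wiedemann's Krylov sequence associated to $A,U,V_0$ is $s[i]=U^TA^iV_0$.
   Formalization: An error in the sequence means s[i] != $U^TA^iV_0$ for some i with K <= i <= delta only, excluding s[0],...,s[K-1]; the values s[i] with i > delta that the checks read are committed too and unconstrained. Apart from conventions, each condition added here is assumed in the paper as well or is needed for the statement above to hold. *)

theory Defs
  imports "Jordan_Normal_Form.Matrix" "HOL-Probability.Probability_Mass_Function"
begin

definition krylov_seq :: "'a::field mat \<Rightarrow> 'a Matrix.vec \<Rightarrow> 'a Matrix.vec \<Rightarrow> nat \<Rightarrow> 'a" where
  "krylov_seq A U V0 i = U \<bullet> ((A ^\<^sub>m i) *\<^sub>v V0)"

definition num_checkpoints :: "nat \<Rightarrow> nat \<Rightarrow> nat" where
  "num_checkpoints \<delta> K = nat \<lceil>real \<delta> / real K\<rceil>"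

definition vecs_over :: "'a set \<Rightarrow> nat \<Rightarrow> 'a Matrix.vec set" where
  "vecs_over S k = {v \<in> carrier_vec k. \<forall>i<k. v $ i \<in> S}"

text \<open>Z = X^T A^K is represented by the
  column vector (A^K)^T X, and T = sum_{i<K} r[i] U^T A^i by the column vector
  sum_{i<K} r[i] (A^i)^T U.\<close>
definition verifier_accepts ::
  "nat \<Rightarrow> nat \<Rightarrow> nat \<Rightarrow> 'a::field mat \<Rightarrow> 'a Matrix.vec \<Rightarrow> (nat \<Rightarrow> 'a Matrix.vec) \<Rightarrow> (nat \<Rightarrow> 'a)
     \<Rightarrow> 'a Matrix.vec \<Rightarrow> 'a Matrix.vec \<Rightarrow> bool" where
  "verifier_accepts n K \<delta> A U W s R X \<longleftrightarrow>
     (let Z = transpose_mat (A ^\<^sub>m K) *\<^sub>v X;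
          T = Matrix.vec n (\<lambda>k. \<Sum>i<K. R $ i * ((transpose_mat (A ^\<^sub>m i) *\<^sub>v U) $ k))
      in \<forall>j\<in>{1..num_checkpoints \<delta> K}.
           X \<bullet> W j = Z \<bullet> W (j - 1) \<and>
           (\<Sum>i<K. R $ i * s (j * K + i)) = T \<bullet> W j)"

end

theory Submission
  imports Defs
begin

no_notation vec_nth (infixl "$" 90)

lemma pow_mat_add_vec:
  assumes A: "A \<in> carrier_mat n n" and v: "v \<in> carrier_vec n"
  shows "A ^\<^sub>m a *\<^sub>v (A ^\<^sub>m b *\<^sub>v v) = A ^\<^sub>m (a + b) *\<^sub>v v"
proof -
  have "A ^\<^sub>m a * A ^\<^sub>m b = A ^\<^sub>m (a + b)"
  proof (induction b)
    case 0
    then show ?case using A by simp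
  next
    case (Suc b)
    have "A ^\<^sub>m a * (A ^\<^sub>m b * A) = (A ^\<^sub>m a * A ^\<^sub>m b) * A"
      using A by (simp add: assoc_mult_mat[of _ n n _ n _ n])
    then show ?case using Suc by simp
  qed
  then show ?thesis using A v
    by (metis assoc_mult_mat_vec pow_carrier_mat)
qed

lemma vecs_over_finite:
  assumes "finite S"
  shows "finite (vecs_over S k)"
proof -
  have "vecs_over S k \<subseteq> (\<lambda>f. Matrix.vec k f) ` (PiE {..<k} (\<lambda>_. S))"
  proof
    fix v assume v: "v \<in> vecs_over S k"
    have "v = Matrix.vec k (restrict (($) v) {..<k})"
      using v by (intro eq_vecI) (auto simp: vecs_over_def)
    moreover have "restrict (($) v) {..<k} \<in> PiE {..<k} (\<lambda>_. S)"
      using v by (auto simp: vecs_over_def)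
    ultimately show "v \<in> (\<lambda>f. Matrix.vec k f) ` (PiE {..<k} (\<lambda>_. S))" by blast
  qed
  moreover have "finite (PiE {..<k} (\<lambda>_. S))"
    using assms by (simp add: finite_PiE)
  ultimately show ?thesis using finite_subset by blast
qed

lemma count_zero:
  fixes c :: "'a::field Matrix.vec"
  assumes S: "finite S" and c: "c \<in> carrier_vec k" and cnz: "c \<noteq> 0\<^sub>v k"
  shows "card {x \<in> vecs_over S k. c \<bullet> x = 0} * card S \<le> card (vecs_over S k)"
proof -
  have "\<exists>l<k. c $ l \<noteq> 0"
  proof (rule ccontr)
    assume "\<not> (\<exists>l<k. c $ l \<noteq> 0)"
    then have "c = 0\<^sub>v k" using c by (intro eq_vecI) auto
    then show False using cnz by simp
  qed
  then obtain l where l: "l < k" "c $ l \<noteq> 0" by blast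
  define Z where "Z = {x \<in> vecs_over S k. c \<bullet> x = 0}"
  define upd where "upd = (\<lambda>(x::'a Matrix.vec, t::'a). Matrix.vec k (\<lambda>i. if i = l then t else x $ i))"
  have "inj_on upd (Z \<times> S)"
  proof (rule inj_onI)
    fix p q assume p: "p \<in> Z \<times> S" and q: "q \<in> Z \<times> S" and e: "upd p = upd q"
    obtain x t where pxt: "p = (x, t)" by (cases p)
    obtain x' t' where qxt: "q = (x', t')" by (cases q)
    have x: "x \<in> carrier_vec k" "c \<bullet> x = 0" and x': "x' \<in> carrier_vec k" "c \<bullet> x' = 0"
      using p q pxt qxt by (auto simp: Z_def vecs_over_def)
    have comp: "(if i = l then t else x $ i) = (if i = l then t' else x' $ i)" if i: "i < k" for i
    proof -
      have "upd p $ i = upd q $ i" using e by simp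
      then show ?thesis using i by (simp add: upd_def pxt qxt)
    qed
    have tt: "t = t'" using comp[OF l(1)] by simp
    have off: "\<And>i. i < k \<Longrightarrow> i \<noteq> l \<Longrightarrow> x $ i = x' $ i" using comp by fastforce
    have "c \<bullet> (x - x') = (\<Sum>i\<in>{0..<k}. c $ i * (x - x') $ i)"
      using x' by (simp add: scalar_prod_def)
    also have "\<dots> = (\<Sum>i\<in>{0..<k}. if i = l then c $ l * (x $ l - x' $ l) else 0)"
      by (rule sum.cong) (use x x' off in auto)
    also have "\<dots> = c $ l * (x $ l - x' $ l)" using l by simp
    finally have "c $ l * (x $ l - x' $ l) = 0"
      using x x' c by (simp add: scalar_prod_minus_distrib[OF c x(1) x'(1)])
    then have "x $ l = x' $ l" using l by simp
    then have "x = x'" using x x' off by (intro eq_vecI) (metis carrier_vecD, simp)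
    then show "p = q" using pxt qxt tt by simp
  qed
  moreover have "upd ` (Z \<times> S) \<subseteq> vecs_over S k"
    by (auto simp: upd_def Z_def vecs_over_def)
  ultimately have "card (Z \<times> S) \<le> card (vecs_over S k)"
    using card_inj_on_le vecs_over_finite[OF S] by blast
  then show ?thesis by (simp add: Z_def card_cartesian_product)
qed

lemma T_dot:
  fixes A :: "'a::field mat"
  assumes A: "A \<in> carrier_mat n n" and U: "U \<in> carrier_vec n" and w: "w \<in> carrier_vec n"
  shows "Matrix.vec n (\<lambda>k. \<Sum>i<K. R $ i * ((transpose_mat (A ^\<^sub>m i) *\<^sub>v U) $ k)) \<bullet> w
       = (\<Sum>i<K. R $ i * (U \<bullet> (A ^\<^sub>m i *\<^sub>v w)))"
proof -
  let ?t = "\<lambda>i. transpose_mat (A ^\<^sub>m i) *\<^sub>v U"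
  have "Matrix.vec n (\<lambda>k. \<Sum>i<K. R $ i * (?t i $ k)) \<bullet> w
      = (\<Sum>k\<in>{0..<n}. (\<Sum>i<K. R $ i * (?t i $ k)) * w $ k)"
    using w by (simp add: scalar_prod_def)
  also have "\<dots> = (\<Sum>k\<in>{0..<n}. \<Sum>i<K. R $ i * (?t i $ k * w $ k))"
    by (simp add: sum_distrib_right mult.assoc)
  also have "\<dots> = (\<Sum>i<K. \<Sum>k\<in>{0..<n}. R $ i * (?t i $ k * w $ k))"
    by (rule sum.swap)
  also have "\<dots> = (\<Sum>i<K. R $ i * (?t i \<bullet> w))"
    using w by (simp add: scalar_prod_def sum_distrib_left)
  also have "\<dots> = (\<Sum>i<K. R $ i * (U \<bullet> (A ^\<^sub>m i *\<^sub>v w)))"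
    by (rule sum.cong) (use A U w in \<open>auto simp: transpose_vec_mult_scalar[of _ n n]\<close>)
  finally show ?thesis .
qed

theorem mainTheorem3:
  fixes A :: "'a::field mat" and U V0 :: "'a Matrix.vec" and n \<delta> K :: nat
    and S :: "'a set" and W :: "nat \<Rightarrow> 'a Matrix.vec" and s :: "nat \<Rightarrow> 'a"
  assumes "A \<in> carrier_mat n n" and "U \<in> carrier_vec n" and "V0 \<in> carrier_vec n"
    and "\<delta> \<ge> 1" and "1 \<le> K" and "K < min n \<delta>"
    and "finite S" and "S \<noteq> {}"
    and "W 0 = V0" and "\<forall>j\<le>num_checkpoints \<delta> K. W j \<in> carrier_vec n"
    and "(\<exists>j\<in>{1..num_checkpoints \<delta> K}. W j \<noteq> (A ^\<^sub>m (j * K)) *\<^sub>v V0)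
         \<or> (\<exists>i\<in>{K..\<delta>}. s i \<noteq> krylov_seq A U V0 i)"
  shows "measure_pmf.prob (pmf_of_set (vecs_over S K \<times> vecs_over S n))
           {(R, X). verifier_accepts n K \<delta> A U W s R X} \<le> 1 / real (card S)"
proof -
  note A = assms(1) and U = assms(2) and V0 = assms(3) and K1 = assms(5) and Kn = assms(6)
    and fS = assms(7) and Sne = assms(8) and W0 = assms(9) and Wc = assms(10) and bad = assms(11)
  define m where "m = num_checkpoints \<delta> K"
  define VR where "VR = vecs_over S K"
  define VX where "VX = vecs_over S n"
  define E where "E = {(R, X). verifier_accepts n K \<delta> A U W s R X}"
  have fVR: "finite VR" and fVX: "finite VX" using vecs_over_finite[OF fS] by (auto simp: VR_def VX_def)
  have cS: "card S > 0" using fS Sne by (simp add: card_gt_0_iff)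
  have dm: "\<delta> \<le> m * K"
  proof -
    have "real \<delta> / real K \<le> real m"
      unfolding m_def num_checkpoints_def by linarith
    then have "real \<delta> \<le> real m * real K" using K1 by (simp add: divide_le_eq)
    then show ?thesis by (metis of_nat_le_iff of_nat_mult)
  qed
  have acc: "X \<bullet> W j = (transpose_mat (A ^\<^sub>m K) *\<^sub>v X) \<bullet> W (j - 1) \<and>
           (\<Sum>i<K. R $ i * s (j * K + i)) = (\<Sum>i<K. R $ i * (U \<bullet> (A ^\<^sub>m i *\<^sub>v W j)))"
    if "(R, X) \<in> E" "j \<in> {1..m}" for R X j
  proof -
    have Wj: "W j \<in> carrier_vec n" using Wc that(2) by (auto simp: m_def)
    show ?thesis using that T_dot[OF A U Wj, where K=K and R=R]
      by (auto simp: E_def verifier_accepts_def m_def Let_def)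
  qed
  have key: "card ((VR \<times> VX) \<inter> E) * card S \<le> card VR * card VX"
  proof (cases "\<exists>j\<in>{1..m}. W j \<noteq> (A ^\<^sub>m (j * K)) *\<^sub>v V0")
    case True
    then obtain j0 where j0: "j0 \<in> {1..m}" "W j0 \<noteq> (A ^\<^sub>m (j0 * K)) *\<^sub>v V0"
      and j0min: "\<And>j. j < j0 \<Longrightarrow> \<not> (j \<in> {1..m} \<and> W j \<noteq> (A ^\<^sub>m (j * K)) *\<^sub>v V0)"
      using exists_least_iff[of "\<lambda>j. j \<in> {1..m} \<and> W j \<noteq> (A ^\<^sub>m (j * K)) *\<^sub>v V0"] by blast
    have Wprev: "W (j0 - 1) = (A ^\<^sub>m ((j0 - 1) * K)) *\<^sub>v V0"
    proof (cases "j0 - 1 = 0")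
      case True
      then show ?thesis using W0 V0 A by simp
    next
      case False
      then show ?thesis using j0min[of "j0 - 1"] j0 by auto
    qed
    have Wj0: "W j0 \<in> carrier_vec n" and Wp: "W (j0 - 1) \<in> carrier_vec n"
      using Wc j0 by (auto simp: m_def)
    define d where "d = W j0 - A ^\<^sub>m K *\<^sub>v W (j0 - 1)"
    have AKW: "A ^\<^sub>m K *\<^sub>v W (j0 - 1) = A ^\<^sub>m (j0 * K) *\<^sub>v V0"
    proof -
      have "K + (j0 - 1) * K = j0 * K" using j0 by (cases j0) auto
      then show ?thesis using Wprev pow_mat_add_vec[OF A V0, of K "(j0 - 1) * K"] by simp
    qed
    have AKc: "A ^\<^sub>m K *\<^sub>v W (j0 - 1) \<in> carrier_vec n" using A Wp by (metis mult_mat_vec_carrier pow_carrier_mat)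
    have dc: "d \<in> carrier_vec n" using Wj0 AKc by (simp add: d_def)
    have dnz: "d \<noteq> 0\<^sub>v n"
    proof
      assume d0: "d = 0\<^sub>v n"
      have comp: "W j0 $ i = (A ^\<^sub>m K *\<^sub>v W (j0 - 1)) $ i" if i: "i < n" for i
      proof -
        have "d $ i = 0\<^sub>v n $ i" using d0 by simp
        then have "(W j0 - A ^\<^sub>m K *\<^sub>v W (j0 - 1)) $ i = 0" using i by (simp add: d_def)
        then show ?thesis using i Wj0 AKc by (metis carrier_vecD index_minus_vec(1) right_minus_eq)
      qed
      have "W j0 = A ^\<^sub>m K *\<^sub>v W (j0 - 1)"
        using Wj0 AKc comp by (metis carrier_vecD eq_vecI)
      then show False using AKW j0 by simp
    qed
    have "(VR \<times> VX) \<inter> E \<subseteq> VR \<times> {X \<in> VX. d \<bullet> X = 0}"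
    proof clarify
      fix R X assume RX: "R \<in> VR" "X \<in> VX" "(R, X) \<in> E"
      have Xc: "X \<in> carrier_vec n" using RX by (simp add: VX_def vecs_over_def)
      have "X \<bullet> W j0 = X \<bullet> (A ^\<^sub>m K *\<^sub>v W (j0 - 1))"
        using acc[OF RX(3) j0(1)] transpose_vec_mult_scalar[of "A ^\<^sub>m K" n n "W (j0 - 1)" X] A Wp Xc
        by simp
      then have "X \<bullet> d = 0" unfolding d_def
        using scalar_prod_minus_distrib[OF Xc Wj0 AKc] by simp
      then show "d \<bullet> X = 0" using comm_scalar_prod[OF dc Xc] by simp
    qed
    then have "card ((VR \<times> VX) \<inter> E) \<le> card (VR \<times> {X \<in> VX. d \<bullet> X = 0})"
      using fVR fVX by (intro card_mono) auto
    also have "\<dots> = card VR * card {X \<in> VX. d \<bullet> X = 0}" by (simp add: card_cartesian_product)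
    finally have "card ((VR \<times> VX) \<inter> E) * card S \<le> card VR * card {X \<in> VX. d \<bullet> X = 0} * card S"
      by (rule mult_le_mono1)
    also have "\<dots> = card VR * (card {X \<in> VX. d \<bullet> X = 0} * card S)"
      by (simp only: mult.assoc)
    also have "\<dots> \<le> card VR * card VX"
      using count_zero[OF fS dc dnz] by (simp add: VX_def)
    finally show ?thesis .
  next
    case False
    then have Wok: "\<And>j. j \<in> {1..m} \<Longrightarrow> W j = (A ^\<^sub>m (j * K)) *\<^sub>v V0" by blast
    obtain i where i: "i \<in> {K..\<delta>}" "s i \<noteq> krylov_seq A U V0 i"
      using bad False by (auto simp: m_def)
    define j where "j = i div K"
    define i' where "i' = i mod K"
    have ii: "i = j * K + i'" by (simp add: j_def i'_def)
    have i'K: "i' < K" using K1 by (simp add: i'_def)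
    have j1: "j \<ge> 1" using i K1 by (simp add: j_def div_greater_zero_iff Suc_le_eq)
    have jm: "j \<le> m"
    proof -
      have "j * K \<le> \<delta>" using ii i by simp
      then have "j * K \<le> m * K" using dm by (rule le_trans)
      then show ?thesis using K1 by simp
    qed
    define c where "c = Matrix.vec K (\<lambda>t. s (j * K + t) - krylov_seq A U V0 (j * K + t))"
    have cc: "c \<in> carrier_vec K" by (simp add: c_def)
    have cnz: "c \<noteq> 0\<^sub>v K"
    proof
      assume "c = 0\<^sub>v K"
      then have "c $ i' = 0" using i'K by simp
      moreover have "c $ i' = s i - krylov_seq A U V0 i" using i'K ii by (simp add: c_def)
      ultimately show False using i(2) by simp
    qed
    have "(VR \<times> VX) \<inter> E \<subseteq> {R \<in> VR. c \<bullet> R = 0} \<times> VX"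
    proof clarify
      fix R X assume RX: "R \<in> VR" "X \<in> VX" "(R, X) \<in> E"
      have Rc: "R \<in> carrier_vec K" using RX by (simp add: VR_def vecs_over_def)
      have jin: "j \<in> {1..m}" using j1 jm by simp
      have kr: "U \<bullet> (A ^\<^sub>m t *\<^sub>v W j) = krylov_seq A U V0 (j * K + t)" for t
        using Wok[OF jin] pow_mat_add_vec[OF A V0, of t "j * K"]
        by (simp add: krylov_seq_def add.commute)
      have "(\<Sum>t<K. R $ t * s (j * K + t)) = (\<Sum>t<K. R $ t * krylov_seq A U V0 (j * K + t))"
        using acc[OF RX(3) jin] kr by simp
      then have "(\<Sum>t<K. R $ t * s (j * K + t)) - (\<Sum>t<K. R $ t * krylov_seq A U V0 (j * K + t)) = 0"
        by simp
      then have "(\<Sum>t<K. R $ t * s (j * K + t) - R $ t * krylov_seq A U V0 (j * K + t)) = 0"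
        by (simp only: sum_subtractf)
      moreover have "(\<Sum>t<K. c $ t * R $ t) = (\<Sum>t<K. R $ t * s (j * K + t) - R $ t * krylov_seq A U V0 (j * K + t))"
        by (rule sum.cong) (auto simp: c_def right_diff_distrib mult.commute)
      ultimately have "(\<Sum>t<K. c $ t * R $ t) = 0" by simp
      then show "c \<bullet> R = 0" using Rc by (simp add: scalar_prod_def atLeast0LessThan)
    qed
    then have "card ((VR \<times> VX) \<inter> E) \<le> card ({R \<in> VR. c \<bullet> R = 0} \<times> VX)"
      using fVR fVX by (intro card_mono) auto
    also have "\<dots> = card {R \<in> VR. c \<bullet> R = 0} * card VX" by (simp add: card_cartesian_product)
    finally have "card ((VR \<times> VX) \<inter> E) * card S \<le> card {R \<in> VR. c \<bullet> R = 0} * card VX * card S"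
      by (rule mult_le_mono1)
    also have "\<dots> = (card {R \<in> VR. c \<bullet> R = 0} * card S) * card VX"
      by (simp only: mult_ac)
    also have "\<dots> \<le> card VR * card VX"
      using count_zero[OF fS cc cnz] by (simp add: VR_def)
    finally show ?thesis .
  qed
  have "measure_pmf.prob (pmf_of_set (VR \<times> VX)) E = card ((VR \<times> VX) \<inter> E) / card (VR \<times> VX)"
  proof (rule measure_pmf_of_set)
    obtain a where a: "a \<in> S" using Sne by blast
    have "Matrix.vec K (\<lambda>_. a) \<in> VR" "Matrix.vec n (\<lambda>_. a) \<in> VX"
      using a by (auto simp: VR_def VX_def vecs_over_def)
    then show "VR \<times> VX \<noteq> {}" by blast
    show "finite (VR \<times> VX)" using fVR fVX by simp
  qed
  also have "\<dots> \<le> 1 / real (card S)"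
  proof (cases "card (VR \<times> VX) = 0")
    case True then show ?thesis by simp
  next
    case False
    then have "real (card (VR \<times> VX)) > 0" by simp
    moreover have "real (card ((VR \<times> VX) \<inter> E)) * real (card S) \<le> real (card (VR \<times> VX))"
      using key by (simp add: card_cartesian_product) (metis of_nat_le_iff of_nat_mult)
    ultimately show ?thesis using cS by (simp add: divide_simps)
  qed
  finally show ?thesis by (simp add: VR_def VX_def E_def)
qed

end
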